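(* For every $m\ge 0$, the following identity holds in $A_{M,M^\perp}$: \[ \delta^m=\sum_{(\mathcal F|\mathcal G,\mathbf e)\in\mathcal T^m}x_{\mathcal F|\mathcal G}, \] where $\mathcal T^m$ is the set of pairs $(\mathcal F|\mathcal G,\mathbf e)$ such that $\mathcal F|\mathcal G$ is a biflag of length $m$, with biflats indexed $F_1|G_1,\dots,F_m|G_m$ so that $F_1\subseteq\cdots\subseteq F_m$ and $G_1\supseteq\cdots\supseteq G_m$, and $\mathbf e=(e_1,\dots,e_m)$ is a sequence of distinct elements of $E$ with, for every $1\le i\le m$, \[ e_i\in F_i\cap G_i\quad\text{and}\quad e_i=\max\Big(E-\bigcup_{j:\,e_j>e_i}(F_j\cap G_j)\Big). \]
   Context: Let $M$ be a matroid with no loops and no coloops on the ground set $E=\{0,1,\dots,n\}$, totally ordered by the usual order of integers; $M^\perp$ its dual. A biflat of $M$ is a pair $F|G$ where $F$ is a flat of $M$, $G$ is a flat of $M^\perp$, both are nonempty, they are not both equal to $E$, and $F\cup G=E$. Two biflats $F|G$, $F'|G'$ are compatible if ($F\subseteq F'$ and $G\supseteq G'$) or ($F\supseteq F'$ and $G\subseteq G'$). A biflag is a set of pairwise compatible biflats with $\bigcup_{F|G}(F\cap G)\neq E$; its length is its number of biflats. Conormal Chow ring: $S$ is the polynomial ring over $\mathbb R$ in variables $x_{F|G}$, one per biflat; $x_{\mathcal F|\mathcal G}=\prod_{F|G\in\mathcal F|\mathcal G}x_{F|G}$ for a set of biflats. For $i\in E$, $\gamma_i=\sum_{i\in F,\,F\neq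 E}x_{F|G}$, $\bar\gamma_i=\sum_{i\in G,\,G\neq E}x_{F|G}$, $\delta_i=\sum_{i\in F\cap G}x_{F|G}$. $I$ is generated by the $x_{\mathcal F|\mathcal G}$ for sets of biflats that are not biflags, $J$ by all $\gamma_i-\gamma_j$, $\bar\gamma_i-\bar\gamma_j$; $A_{M,M^\perp}=S/(I+J)$, and $\delta$ denotes the common class of all $\delta_i$. *)

theory Defs
  imports Complex_Main "HOL-Library.Poly_Mapping"
begin

definition matroid_bases :: "nat set \<Rightarrow> nat set set \<Rightarrow> bool" where
  "matroid_bases E B \<longleftrightarrow> finite E \<and> B \<noteq> {} \<and> (\<forall>b\<in>B. b \<subseteq> E) \<and>
     (\<forall>b1\<in>B. \<forall>b2\<in>B. \<forall>x\<in>b1 - b2. \<exists>y\<in>b2 - b1. insert y (b1 - {x}) \<in> B)"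

definition no_loops :: "nat set \<Rightarrow> nat set set \<Rightarrow> bool" where
  "no_loops E B \<longleftrightarrow> (\<forall>e\<in>E. \<exists>b\<in>B. e \<in> b)"

definition no_coloops :: "nat set \<Rightarrow> nat set set \<Rightarrow> bool" where
  "no_coloops E B \<longleftrightarrow> (\<forall>e\<in>E. \<exists>b\<in>B. e \<notin> b)"

definition dual_bases :: "nat set \<Rightarrow> nat set set \<Rightarrow> nat set set" where
  "dual_bases E B = (\<lambda>b. E - b) ` B"

definition mrank :: "nat set set \<Rightarrow> nat set \<Rightarrow> nat" where
  "mrank B X = Max ((\<lambda>b. card (X \<inter> b)) ` B)"

definition is_flat :: "nat set \<Rightarrow> nat set set \<Rightarrow> nat set \<Rightarrow> bool" where
  "is_flat E B F \<longleftrightarrow> F \<subseteq> E \<and> (\<forall>e\<in>E - F. mrank B (insert e F) > mrank B F)"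

type_synonym biflat = "nat set \<times> nat set"

definition is_biflat :: "nat set \<Rightarrow> nat set set \<Rightarrow> biflat \<Rightarrow> bool" where
  "is_biflat E B FG \<longleftrightarrow> (case FG of (F, G) \<Rightarrow>
     is_flat E B F \<and> is_flat E (dual_bases E B) G \<and> F \<noteq> {} \<and> G \<noteq> {} \<and>
     \<not> (F = E \<and> G = E) \<and> F \<union> G = E)"

definition compatible :: "biflat \<Rightarrow> biflat \<Rightarrow> bool" where
  "compatible FG FG' \<longleftrightarrow> (case FG of (F, G) \<Rightarrow> case FG' of (F', G') \<Rightarrow>
     (F \<subseteq> F' \<and> G' \<subseteq> G) \<or> (F' \<subseteq> F \<and> G \<subseteq> G'))"

definition is_biflag :: "nat set \<Rightarrow> nat set set \<Rightarrow> biflat set \<Rightarrow> bool" where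
  "is_biflag E B S \<longleftrightarrow> (\<forall>FG\<in>S. is_biflat E B FG) \<and>
     (\<forall>FG\<in>S. \<forall>FG'\<in>S. compatible FG FG') \<and>
     (\<Union>(F, G)\<in>S. F \<inter> G) \<noteq> E"

text \<open>Polynomials over the reals: finitely supported maps from monomials
  (finitely supported exponent vectors) to coefficients.\<close>
type_synonym poly = "((biflat \<Rightarrow>\<^sub>0 nat) \<Rightarrow>\<^sub>0 real)"

definition var :: "biflat \<Rightarrow> poly" where
  "var v = Poly_Mapping.single (Poly_Mapping.single v 1) 1"

definition xprod :: "biflat set \<Rightarrow> poly" where
  "xprod S = (\<Prod>v\<in>S. var v)"

definition biflats :: "nat set \<Rightarrow> nat set set \<Rightarrow> biflat set" where
  "biflats E B = {FG. is_biflat E B FG}"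

definition gamma :: "nat set \<Rightarrow> nat set set \<Rightarrow> nat \<Rightarrow> poly" where
  "gamma E B i = (\<Sum>FG\<in>{(F, G). is_biflat E B (F, G) \<and> i \<in> F \<and> F \<noteq> E}. var FG)"

definition gammabar :: "nat set \<Rightarrow> nat set set \<Rightarrow> nat \<Rightarrow> poly" where
  "gammabar E B i = (\<Sum>FG\<in>{(F, G). is_biflat E B (F, G) \<and> i \<in> G \<and> G \<noteq> E}. var FG)"

definition delta :: "nat set \<Rightarrow> nat set set \<Rightarrow> nat \<Rightarrow> poly" where
  "delta E B i = (\<Sum>FG\<in>{(F, G). is_biflat E B (F, G) \<and> i \<in> F \<inter> G}. var FG)"

definition ideal_gen :: "poly set \<Rightarrow> poly set" where
  "ideal_gen S = {p. \<exists>A c. finite A \<and> A \<subseteq> S \<and> p = (\<Sum>g\<in>A. c g * g)}"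

definition I_gens :: "nat set \<Rightarrow> nat set set \<Rightarrow> poly set" where
  "I_gens E B = {xprod S | S. S \<subseteq> biflats E B \<and> \<not> is_biflag E B S}"

definition J_gens :: "nat set \<Rightarrow> nat set set \<Rightarrow> poly set" where
  "J_gens E B = {gamma E B i - gamma E B j | i j. i \<in> E \<and> j \<in> E} \<union>
                {gammabar E B i - gammabar E B j | i j. i \<in> E \<and> j \<in> E}"

definition chow_eq :: "nat set \<Rightarrow> nat set set \<Rightarrow> poly \<Rightarrow> poly \<Rightarrow> bool" where
  "chow_eq E B p q \<longleftrightarrow> p - q \<in> ideal_gen (I_gens E B \<union> J_gens E B)"

text \<open>A biflag of length m is represented by the list of its biflats,
  indexed so that F_1 \<subseteq> ... \<subseteq> F_m and G_1 \<supseteq> ... \<supseteq> G_m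
  (this indexing is uniquely determined by the biflag); e is the list (e_1,...,e_m).\<close>
definition T_set :: "nat set \<Rightarrow> nat set set \<Rightarrow> nat \<Rightarrow> (biflat list \<times> nat list) set" where
  "T_set E B m = {(L, e). length L = m \<and> distinct L \<and> is_biflag E B (set L) \<and>
     (\<forall>i j. i < j \<and> j < m \<longrightarrow> fst (L ! i) \<subseteq> fst (L ! j) \<and> snd (L ! j) \<subseteq> snd (L ! i)) \<and>
     length e = m \<and> distinct e \<and> set e \<subseteq> E \<and>
     (\<forall>i < m. e ! i \<in> fst (L ! i) \<inter> snd (L ! i) \<and>
        e ! i = Max (E - (\<Union>j\<in>{j. j < m \<and> e ! j > e ! i}. fst (L ! j) \<inter> snd (L ! j))))}"

end

theory Submission
  imports Defs
begin


lemma ig_gen: "g \<in> S \<Longrightarrow> g \<in> ideal_gen S"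
  unfolding ideal_gen_def by (rule CollectI, rule exI[of _ "{g}"], rule exI[of _ "\<lambda>_. 1"]) simp

lemma ig_zero: "0 \<in> ideal_gen S"
  unfolding ideal_gen_def by (rule CollectI, rule exI[of _ "{}"]) simp

lemma ig_add: assumes "p \<in> ideal_gen S" "q \<in> ideal_gen S" shows "p + q \<in> ideal_gen S"
proof -
  obtain A c where A: "finite A" "A \<subseteq> S" "p = (\<Sum>g\<in>A. c g * g)" using assms(1) unfolding ideal_gen_def by blast
  obtain A' c' where A': "finite A'" "A' \<subseteq> S" "q = (\<Sum>g\<in>A'. c' g * g)" using assms(2) unfolding ideal_gen_def by blast
  define d where "d g = (if g \<in> A then c g else 0) + (if g \<in> A' then c' g else 0)" for g
  have 1: "(\<Sum>g\<in>A\<union>A'. (if g \<in> A then c g else 0) * g) = p"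
  proof -
    have "(\<Sum>g\<in>A\<union>A'. (if g \<in> A then c g else 0) * g) = (\<Sum>g\<in>A\<union>A'. (if g \<in> A then c g * g else 0))"
      by (rule sum.cong) auto
    also have "\<dots> = (\<Sum>g\<in>(A\<union>A') \<inter> A. c g * g)" using A A' sum.inter_restrict[of "A\<union>A'" "\<lambda>g. c g * g" A] by simp
    also have "(A\<union>A') \<inter> A = A" by blast
    finally show ?thesis using A by simp
  qed
  have 2: "(\<Sum>g\<in>A\<union>A'. (if g \<in> A' then c' g else 0) * g) = q"
  proof -
    have "(\<Sum>g\<in>A\<union>A'. (if g \<in> A' then c' g else 0) * g) = (\<Sum>g\<in>A\<union>A'. (if g \<in> A' then c' g * g else 0))"
      by (rule sum.cong) auto
    also have "\<dots> = (\<Sum>g\<in>(A\<union>A') \<inter> A'. c' g * g)" using A A' sum.inter_restrict[of "A\<union>A'" "\<lambda>g. c' g * g" A'] by simp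
    also have "(A\<union>A') \<inter> A' = A'" by blast
    finally show ?thesis using A' by simp
  qed
  have "p + q = (\<Sum>g\<in>A\<union>A'. d g * g)"
    unfolding d_def distrib_right sum.distrib 1 2 ..
  thus ?thesis unfolding ideal_gen_def using A A' by (intro CollectI exI[of _ "A\<union>A'"] exI[of _ d]) simp
qed

lemma ig_mult: assumes "p \<in> ideal_gen S" shows "r * p \<in> ideal_gen S"
proof -
  obtain A c where A: "finite A" "A \<subseteq> S" "p = (\<Sum>g\<in>A. c g * g)" using assms(1) unfolding ideal_gen_def by blast
  have "r * p = (\<Sum>g\<in>A. (r * c g) * g)" unfolding A(3) sum_distrib_left by (simp add: mult.assoc)
  thus ?thesis unfolding ideal_gen_def using A by (intro CollectI exI[of _ A] exI[of _ "\<lambda>g. r * c g"]) simp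
qed

lemma ig_mult2: assumes "p \<in> ideal_gen S" shows "p * r \<in> ideal_gen S"
  using ig_mult[OF assms, of r] by (simp add: mult.commute)

lemma ig_neg: assumes "p \<in> ideal_gen S" shows "- p \<in> ideal_gen S"
  using ig_mult[OF assms, of "-1"] by simp

lemma ig_diff: assumes "p \<in> ideal_gen S" "q \<in> ideal_gen S" shows "p - q \<in> ideal_gen S"
  using ig_add[OF assms(1) ig_neg[OF assms(2)]] by simp

lemma ig_sum: "(\<And>x. x \<in> A \<Longrightarrow> h x \<in> ideal_gen S) \<Longrightarrow> sum h A \<in> ideal_gen S"
proof (induction A rule: infinite_finite_induct)
  case (infinite A) then show ?case by (simp add: ig_zero)
next
  case empty then show ?case by (simp add: ig_zero)
next
  case (insert x F) then show ?case by (simp add: ig_add)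
qed



definition cap :: "biflat \<Rightarrow> nat set" where "cap x = fst x \<inter> snd x"

abbreviation KK where "KK E B \<equiv> ideal_gen (I_gens E B \<union> J_gens E B)"

lemma U_cap: "(\<Union>(F, G)\<in>S. F \<inter> G) = (\<Union>x\<in>S. cap x)"
  by (auto simp: cap_def)

lemma biflat_sub: "is_biflat E B x \<Longrightarrow> fst x \<subseteq> E \<and> snd x \<subseteq> E"
  by (cases x) (auto simp: is_biflat_def is_flat_def)

lemma fin_biflats: assumes "finite E" shows "finite (biflats E B)"
proof -
  have "biflats E B \<subseteq> Pow E \<times> Pow E" using biflat_sub[of E B] by (force simp: biflats_def)
  thus ?thesis using assms by (meson finite_Pow_iff finite_SigmaI finite_subset)
qed

lemma delta_eq: assumes "finite E" shows "delta E B k = sum var {x \<in> biflats E B. k \<in> cap x}"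
proof -
  have "{(F, G). is_biflat E B (F, G) \<and> k \<in> F \<inter> G} = {x \<in> biflats E B. k \<in> cap x}"
    by (auto simp: biflats_def cap_def)
  thus ?thesis unfolding delta_def by simp
qed

lemma sum_filter_if: "finite A \<Longrightarrow> sum g {x\<in>A. P x} = (\<Sum>x\<in>A. if P x then g x else 0)"
  by (rule sum.inter_filter)

lemma delta_diff:
  assumes fin: "finite E" and ij: "i \<in> E" "j \<in> E"
  shows "delta E B i - delta E B j \<in> KK E B"
proof -
  let ?BF = "biflats E B"
  have fb: "finite ?BF" using fin_biflats[OF fin] .
  have d: "delta E B k = (\<Sum>x\<in>?BF. if k \<in> fst x \<and> k \<in> snd x then var x else 0)" for k
    unfolding delta_eq[OF fin] sum_filter_if[OF fb, symmetric] by (simp add: cap_def)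
  have g: "gamma E B k = (\<Sum>x\<in>?BF. if k \<in> fst x \<and> fst x \<noteq> E then var x else 0)" for k
  proof -
    have "{(F, G). is_biflat E B (F, G) \<and> k \<in> F \<and> F \<noteq> E} = {x \<in> ?BF. k \<in> fst x \<and> fst x \<noteq> E}"
      by (auto simp: biflats_def)
    thus ?thesis unfolding gamma_def sum_filter_if[OF fb, symmetric] by simp
  qed
  have gb: "gammabar E B k = (\<Sum>x\<in>?BF. if k \<in> snd x \<and> snd x \<noteq> E then var x else 0)" for k
  proof -
    have "{(F, G). is_biflat E B (F, G) \<and> k \<in> G \<and> G \<noteq> E} = {x \<in> ?BF. k \<in> snd x \<and> snd x \<noteq> E}"
      by (auto simp: biflats_def)
    thus ?thesis unfolding gammabar_def sum_filter_if[OF fb, symmetric] by simp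
  qed
  have eq: "delta E B i - delta E B j = (gamma E B i - gamma E B j) + (gammabar E B i - gammabar E B j)"
    unfolding d g gb sum_subtractf[symmetric] sum.distrib[symmetric]
  proof (rule sum.cong[OF refl])
    fix x assume "x \<in> ?BF"
    then obtain F G where x: "x = (F, G)" "is_biflat E B (F, G)" by (cases x) (auto simp: biflats_def)
    then have U: "F \<union> G = E" and nb: "\<not> (F = E \<and> G = E)" by (auto simp: is_biflat_def)
    show "(if i \<in> fst x \<and> i \<in> snd x then var x else 0) - (if j \<in> fst x \<and> j \<in> snd x then var x else 0) =
         (if i \<in> fst x \<and> fst x \<noteq> E then var x else 0) - (if j \<in> fst x \<and> fst x \<noteq> E then var x else 0) +
         ((if i \<in> snd x \<and> snd x \<noteq> E then var x else 0) - (if j \<in> snd x \<and> snd x \<noteq> E then var x else 0))"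
    proof (cases "F = E")
      case True
      then have "G \<noteq> E" using nb by auto
      then show ?thesis using True x ij by auto
    next
      case False
      show ?thesis
      proof (cases "G = E")
        case True then show ?thesis using False x ij by auto
      next
        case False2: False
        have "i \<in> F \<or> i \<in> G" "j \<in> F \<or> j \<in> G" using U ij by auto
        then show ?thesis using False False2 x by auto
      qed
    qed
  qed
  have "gamma E B i - gamma E B j \<in> KK E B"
    by (rule ig_gen) (use ij in \<open>auto simp: J_gens_def\<close>)
  moreover have "gammabar E B i - gammabar E B j \<in> KK E B"
    by (rule ig_gen) (use ij in \<open>auto simp: J_gens_def\<close>)
  ultimately show ?thesis unfolding eq by (rule ig_add)
qed

lemma biflag_sub: assumes "is_biflag E B S" "S' \<subseteq> S" shows "is_biflag E B S'"
proof -
  have "(\<Union>x\<in>S'. cap x) \<subseteq> (\<Union>x\<in>S. cap x)" using assms(2) by blast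
  moreover have "(\<Union>x\<in>S. cap x) \<subseteq> E" using assms(1) biflat_sub[of E B] by (fastforce simp: is_biflag_def cap_def)
  moreover have "(\<Union>x\<in>S. cap x) \<noteq> E" using assms(1) by (simp add: is_biflag_def U_cap)
  ultimately have "(\<Union>x\<in>S'. cap x) \<noteq> E" by blast
  thus ?thesis using assms unfolding is_biflag_def U_cap by blast
qed

definition en :: "nat set \<Rightarrow> biflat set \<Rightarrow> nat" where
  "en E S = Max (E - (\<Union>x\<in>S. cap x))"

lemma en_props: assumes "finite E" "is_biflag E B S"
  shows "en E S \<in> E" "en E S \<notin> (\<Union>x\<in>S. cap x)"
proof -
  have "(\<Union>x\<in>S. cap x) \<subseteq> E" using assms(2) biflat_sub[of E B] by (fastforce simp: is_biflag_def cap_def)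
  moreover have "(\<Union>x\<in>S. cap x) \<noteq> E" using assms(2) by (simp add: is_biflag_def U_cap)
  ultimately have ne: "E - (\<Union>x\<in>S. cap x) \<noteq> {}" by blast
  have "en E S \<in> E - (\<Union>x\<in>S. cap x)" unfolding en_def using assms(1) ne by (intro Max_in) auto
  thus "en E S \<in> E" "en E S \<notin> (\<Union>x\<in>S. cap x)" by auto
qed



definition TT :: "nat set \<Rightarrow> nat set set \<Rightarrow> nat \<Rightarrow> (biflat set \<times> (biflat \<Rightarrow> nat)) set" where
  "TT E B m = {(S, f). finite S \<and> card S = m \<and> is_biflag E B S \<and> (\<forall>x. x \<notin> S \<longrightarrow> f x = 0) \<and>
     inj_on f S \<and> (\<forall>x\<in>S. f x \<in> E \<and> f x \<in> cap x \<and> f x = Max (E - (\<Union>y\<in>{y\<in>S. f x < f y}. cap y)))}"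

lemma TTD: assumes "(S, f) \<in> TT E B m"
  shows "finite S" "card S = m" "is_biflag E B S" "\<And>x. x \<notin> S \<Longrightarrow> f x = 0" "inj_on f S"
    "\<And>x. x \<in> S \<Longrightarrow> f x \<in> E" "\<And>x. x \<in> S \<Longrightarrow> f x \<in> cap x"
    "\<And>x. x \<in> S \<Longrightarrow> f x = Max (E - (\<Union>y\<in>{y\<in>S. f x < f y}. cap y))"
  using assms unfolding TT_def mem_Collect_eq case_prod_conv by blast+

lemma TTI: assumes "finite S" "card S = m" "is_biflag E B S" "\<And>x. x \<notin> S \<Longrightarrow> f x = 0" "inj_on f S"
    "\<And>x. x \<in> S \<Longrightarrow> f x \<in> E" "\<And>x. x \<in> S \<Longrightarrow> f x \<in> cap x"
    "\<And>x. x \<in> S \<Longrightarrow> f x = Max (E - (\<Union>y\<in>{y\<in>S. f x < f y}. cap y))"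
  shows "(S, f) \<in> TT E B m"
  using assms unfolding TT_def mem_Collect_eq case_prod_conv by blast

lemma L1: assumes fin: "finite E" and T: "(S, f) \<in> TT E B m" and x: "x \<in> S"
  shows "en E S < f x"
proof -
  have bf: "is_biflag E B S" using TTD[OF T] by blast
  have fx: "f x \<in> cap x" "f x = Max (E - (\<Union>y\<in>{y\<in>S. f x < f y}. cap y))" using TTD(7,8)[OF T x] by blast+
  have e: "en E S \<in> E - (\<Union>y\<in>{y\<in>S. f x < f y}. cap y)" using en_props[OF fin bf] by blast
  have "en E S \<le> Max (E - (\<Union>y\<in>{y\<in>S. f x < f y}. cap y))" using fin e by (intro Max_ge) auto
  then have le: "en E S \<le> f x" by (simp only: fx(2)[symmetric])
  have "f x \<in> (\<Union>y\<in>S. cap y)" using fx(1) x by (rule UN_I[rotated])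
  then have "en E S \<noteq> f x" using en_props(2)[OF fin bf] by auto
  with le show ?thesis by simp
qed

definition D1 where "D1 E B S = {H \<in> biflats E B. en E S \<in> cap H \<and> is_biflag E B (insert H S)}"
definition D2 where "D2 E B S = {H \<in> biflats E B. en E S \<in> cap H \<and> \<not> is_biflag E B (insert H S)}"

definition psi :: "nat set \<Rightarrow> (biflat set \<times> (biflat \<Rightarrow> nat)) \<times> biflat \<Rightarrow> biflat set \<times> (biflat \<Rightarrow> nat)" where
  "psi E p = (insert (snd p) (fst (fst p)), (snd (fst p))(snd p := en E (fst (fst p))))"

lemma H_notin: assumes fin: "finite E" "is_biflag E B S" "en E S \<in> cap H" shows "H \<notin> S"
  using en_props(2)[OF assms(1,2)] assms(3) by blast

lemma psi_inj: assumes fin: "finite E"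
  shows "inj_on (psi E) (Sigma (TT E B m) (\<lambda>p. D1 E B (fst p)))"
proof (rule inj_onI)
  fix a b assume a: "a \<in> Sigma (TT E B m) (\<lambda>p. D1 E B (fst p))" and b: "b \<in> Sigma (TT E B m) (\<lambda>p. D1 E B (fst p))"
    and eq: "psi E a = psi E b"
  obtain S1 f1 H1 where a': "a = ((S1, f1), H1)" by (metis prod.collapse)
  obtain S2 f2 H2 where b': "b = ((S2, f2), H2)" by (metis prod.collapse)
  have T1: "(S1, f1) \<in> TT E B m" and D1': "H1 \<in> D1 E B S1" using a a' by auto
  have T2: "(S2, f2) \<in> TT E B m" and D2': "H2 \<in> D1 E B S2" using b b' by auto
  have bf1: "is_biflag E B S1" using TTD[OF T1] by blast
  have bf2: "is_biflag E B S2" using TTD[OF T2] by blast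
  have n1: "H1 \<notin> S1" using H_notin[OF fin bf1] D1' by (simp add: D1_def)
  have n2: "H2 \<notin> S2" using H_notin[OF fin bf2] D2' by (simp add: D1_def)
  have z1: "f1 H1 = 0" using TTD(4)[OF T1 n1] .
  have z2: "f2 H2 = 0" using TTD(4)[OF T2 n2] .
  have Seq: "insert H1 S1 = insert H2 S2" and feq: "f1(H1 := en E S1) = f2(H2 := en E S2)"
    using eq unfolding a' b' psi_def by simp_all
  have HH: "H1 = H2"
  proof (rule ccontr)
    assume ne: "H1 \<noteq> H2"
    have "H2 \<in> S1" using Seq ne by (metis insertE insertI1)
    have "H1 \<in> S2" using Seq ne by (metis insertE insertI1)
    have "en E S1 < f1 H2" using L1[OF fin T1 \<open>H2 \<in> S1\<close>] .
    also have "f1 H2 = en E S2" using fun_cong[OF feq, of H2] ne by simp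
    also have "en E S2 < f2 H1" using L1[OF fin T2 \<open>H1 \<in> S2\<close>] .
    also have "f2 H1 = en E S1" using fun_cong[OF feq, of H1] ne by simp
    finally show False by simp
  qed
  have SS: "S1 = S2" using Seq n1 n2 HH by (metis Diff_insert_absorb)
  have ff: "f1 = f2"
  proof
    fix x show "f1 x = f2 x"
    proof (cases "x = H1")
      case True then show ?thesis using z1 z2 HH by simp
    next
      case False then show ?thesis using fun_cong[OF feq, of x] HH by simp
    qed
  qed
  show "a = b" unfolding a' b' using HH SS ff by simp
qed



lemma biflag_biflats: "is_biflag E B S \<Longrightarrow> S \<subseteq> biflats E B"
  unfolding is_biflag_def biflats_def by blast

lemma psi_into: assumes fin: "finite E" and p: "p \<in> Sigma (TT E B m) (\<lambda>p. D1 E B (fst p))"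
  shows "psi E p \<in> TT E B (Suc m)"
proof -
  obtain S f H where p': "p = ((S, f), H)" by (metis prod.collapse)
  have T: "(S, f) \<in> TT E B m" and HD: "H \<in> D1 E B S" using p p' by auto
  have bf: "is_biflag E B S" using TTD(3)[OF T] .
  have Hc: "en E S \<in> cap H" and bfi: "is_biflag E B (insert H S)" using HD by (auto simp: D1_def)
  have nH: "H \<notin> S" using H_notin[OF fin bf Hc] .
  have finS: "finite S" using TTD(1)[OF T] .
  define g where "g = f(H := en E S)"
  have ps: "psi E p = (insert H S, g)" unfolding psi_def p' g_def by simp
  have gH: "g H = en E S" unfolding g_def by simp
  have gS: "g y = f y" if "y \<in> S" for y using that nH unfolding g_def by auto
  have lt: "g H < g y" if "y \<in> S" for y using L1[OF fin T that] gS[OF that] gH by simp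
  show ?thesis unfolding ps
  proof (rule TTI)
    show "finite (insert H S)" using finS by simp
    show "card (insert H S) = Suc m" using finS nH TTD(2)[OF T] by simp
    show "is_biflag E B (insert H S)" using bfi .
    show "g x = 0" if "x \<notin> insert H S" for x using that TTD(4)[OF T, of x] unfolding g_def by auto
    show "inj_on g (insert H S)"
    proof -
      have "inj_on g S" using TTD(5)[OF T] gS by (metis inj_on_cong)
      moreover have "g H \<notin> g ` (S - {H})" using lt by (metis DiffD1 imageE less_irrefl)
      ultimately show ?thesis by (simp add: inj_on_insert)
    qed
    show "g x \<in> E" if "x \<in> insert H S" for x
      using that gH gS[of x] TTD(6)[OF T, of x] en_props(1)[OF fin bf] by (cases "x = H") auto
    show "g x \<in> cap x" if "x \<in> insert H S" for x
      using that gH gS[of x] TTD(7)[OF T, of x] Hc by (cases "x = H") auto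
    show "g x = Max (E - (\<Union>y\<in>{y \<in> insert H S. g x < g y}. cap y))" if "x \<in> insert H S" for x
    proof (cases "x = H")
      case True
      have se: "{y \<in> insert H S. g x < g y} = S" using lt True by auto
      show ?thesis unfolding se using True gH by (simp add: en_def)
    next
      case False
      then have xS: "x \<in> S" using that by simp
      have "(y \<in> insert H S \<and> g x < g y) = (y \<in> S \<and> f x < f y)" for y
      proof (cases "y = H")
        case True then show ?thesis using lt[OF xS] nH by auto
      next
        case False then show ?thesis using gS[of y] gS[OF xS] by auto
      qed
      then have se: "{y \<in> insert H S. g x < g y} = {y\<in>S. f x < f y}" by (rule Collect_cong)
      have gx: "g x = f x" using gS[OF xS] .
      have fx8: "f x = Max (E - (\<Union>y\<in>{y\<in>S. f x < f y}. cap y))" using TTD(8)[OF T xS] .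
      have eqM: "Max (E - (\<Union>y\<in>{y \<in> insert H S. g x < g y}. cap y)) = Max (E - (\<Union>y\<in>{y\<in>S. f x < f y}. cap y))" by (simp only: se)
      show ?thesis by (rule trans[OF gx trans[OF fx8 eqM[symmetric]]])
    qed
  qed
qed

lemma psi_onto: assumes fin: "finite E" and q: "q \<in> TT E B (Suc m)"
  shows "q \<in> psi E ` Sigma (TT E B m) (\<lambda>p. D1 E B (fst p))"
proof -
  obtain S' f' where q': "q = (S', f')" by (metis prod.collapse)
  have T: "(S', f') \<in> TT E B (Suc m)" using q q' by simp
  have finS: "finite S'" using TTD(1)[OF T] .
  have ne: "S' \<noteq> {}" using TTD(2)[OF T] by auto
  have "Min (f' ` S') \<in> f' ` S'" using finS ne by (intro Min_in) auto
  then obtain H where HS: "H \<in> S'" and Hm: "f' H = Min (f' ` S')" by (metis imageE)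
  have le: "f' H \<le> f' y" if "y \<in> S'" for y unfolding Hm using finS that by simp
  have lt: "f' H < f' y" if "y \<in> S'" "y \<noteq> H" for y
  proof -
    have "f' H \<noteq> f' y" using TTD(5)[OF T] HS that by (metis inj_onD)
    thus ?thesis using le[OF that(1)] by simp
  qed
  define S where "S = S' - {H}"
  define f where "f = f'(H := 0)"
  have fS: "f y = f' y" if "y \<in> S" for y using that unfolding S_def f_def by auto
  have bfS: "is_biflag E B S" using biflag_sub[OF TTD(3)[OF T]] unfolding S_def by blast
  have TS: "(S, f) \<in> TT E B m"
  proof (rule TTI)
    show "finite S" using finS unfolding S_def by simp
    show "card S = m" using TTD(2)[OF T] HS finS unfolding S_def by simp
    show "is_biflag E B S" using bfS .
    show "f x = 0" if "x \<notin> S" for x using that TTD(4)[OF T, of x] unfolding S_def f_def by auto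
    show "inj_on f S" using inj_on_subset[OF TTD(5)[OF T], of S] fS unfolding S_def by (metis Diff_subset inj_on_cong)
    show "f x \<in> E" if "x \<in> S" for x using that fS TTD(6)[OF T] unfolding S_def by auto
    show "f x \<in> cap x" if "x \<in> S" for x using that fS TTD(7)[OF T] unfolding S_def by auto
    show "f x = Max (E - (\<Union>y\<in>{y \<in> S. f x < f y}. cap y))" if xS: "x \<in> S" for x
    proof -
      have xS': "x \<in> S'" "x \<noteq> H" using xS unfolding S_def by auto
      have "(y \<in> S \<and> f x < f y) = (y \<in> S' \<and> f' x < f' y)" for y
      proof (cases "y = H")
        case True then show ?thesis using lt[OF xS'] unfolding S_def by auto
      next
        case False then show ?thesis using fS[of y] fS[OF xS] unfolding S_def by auto
      qed
      then have se: "{y \<in> S. f x < f y} = {y\<in>S'. f' x < f' y}" by (rule Collect_cong)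
      have fx: "f x = f' x" using fS[OF xS] .
      have fx8: "f' x = Max (E - (\<Union>y\<in>{y\<in>S'. f' x < f' y}. cap y))" using TTD(8)[OF T xS'(1)] .
      have eqM: "Max (E - (\<Union>y\<in>{y \<in> S. f x < f y}. cap y)) = Max (E - (\<Union>y\<in>{y\<in>S'. f' x < f' y}. cap y))" by (simp only: se)
      show ?thesis by (rule trans[OF fx trans[OF fx8 eqM[symmetric]]])
    qed
  qed
  have seH: "{y \<in> S'. f' H < f' y} = S" using lt unfolding S_def by auto
  have enS: "en E S = f' H"
  proof -
    have "f' H = Max (E - (\<Union>y\<in>{y\<in>S'. f' H < f' y}. cap y))" using TTD(8)[OF T HS] .
    thus ?thesis unfolding seH en_def by simp
  qed
  have HD: "H \<in> D1 E B S"
  proof -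
    have "H \<in> biflats E B" using biflag_biflats[OF TTD(3)[OF T]] HS by blast
    moreover have "en E S \<in> cap H" using TTD(7)[OF T HS] enS by simp
    moreover have "insert H S = S'" using HS unfolding S_def by blast
    ultimately show ?thesis using TTD(3)[OF T] unfolding D1_def by simp
  qed
  have "psi E ((S, f), H) = q"
  proof -
    have "insert H S = S'" using HS unfolding S_def by blast
    moreover have "f(H := en E S) = f'" unfolding enS f_def by simp
    ultimately show ?thesis unfolding psi_def q' by simp
  qed
  moreover have "((S, f), H) \<in> Sigma (TT E B m) (\<lambda>p. D1 E B (fst p))" using TS HD by simp
  ultimately show ?thesis by (metis image_eqI)
qed

lemma psi_image: assumes fin: "finite E"
  shows "psi E ` Sigma (TT E B m) (\<lambda>p. D1 E B (fst p)) = TT E B (Suc m)"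
  using psi_into[OF fin] psi_onto[OF fin] by blast

lemma finite_TT: assumes fin: "finite E" shows "finite (TT E B m)"
proof -
  let ?BF = "biflats E B"
  have "TT E B m \<subseteq> Pow ?BF \<times> {f. \<forall>x. (x \<in> ?BF \<longrightarrow> f x \<in> insert 0 E) \<and> (x \<notin> ?BF \<longrightarrow> f x = 0)}"
  proof
    fix q assume q: "q \<in> TT E B m"
    obtain S f where q': "q = (S, f)" by (metis prod.collapse)
    have T: "(S, f) \<in> TT E B m" using q q' by simp
    have sub: "S \<subseteq> ?BF" using biflag_biflats[OF TTD(3)[OF T]] .
    have "f x \<in> insert 0 E" for x
      using TTD(4)[OF T, of x] TTD(6)[OF T, of x] by (cases "x \<in> S") auto
    moreover have "f x = 0" if "x \<notin> ?BF" for x using that sub TTD(4)[OF T, of x] by blast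
    ultimately show "q \<in> Pow ?BF \<times> {f. \<forall>x. (x \<in> ?BF \<longrightarrow> f x \<in> insert 0 E) \<and> (x \<notin> ?BF \<longrightarrow> f x = 0)}"
      using sub q' by auto
  qed
  moreover have "finite (Pow ?BF \<times> {f. \<forall>x. (x \<in> ?BF \<longrightarrow> f x \<in> insert 0 E) \<and> (x \<notin> ?BF \<longrightarrow> f x = 0)})"
    using fin_biflats[OF fin] fin by (intro finite_cartesian_product finite_set_of_finite_funs) auto
  ultimately show ?thesis by (rule finite_subset)
qed



lemma xprod_insert: "finite S \<Longrightarrow> H \<notin> S \<Longrightarrow> xprod (insert H S) = xprod S * var H"
  unfolding xprod_def by (simp add: mult.commute)

lemma xd: assumes fin: "finite E" and T: "(S, f) \<in> TT E B m"
  shows "xprod S * delta E B (en E S) = (\<Sum>H\<in>D1 E B S. xprod (insert H S)) + (\<Sum>H\<in>D2 E B S. xprod (insert H S))"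
proof -
  have bf: "is_biflag E B S" using TTD(3)[OF T] .
  have finS: "finite S" using TTD(1)[OF T] .
  have Deq: "{x \<in> biflats E B. en E S \<in> cap x} = D1 E B S \<union> D2 E B S" unfolding D1_def D2_def by blast
  have f1: "finite (D1 E B S)" using fin_biflats[OF fin] unfolding D1_def by simp
  have f2: "finite (D2 E B S)" using fin_biflats[OF fin] unfolding D2_def by simp
  have dj: "D1 E B S \<inter> D2 E B S = {}" unfolding D1_def D2_def by blast
  have "xprod S * delta E B (en E S) = (\<Sum>H\<in>D1 E B S \<union> D2 E B S. xprod S * var H)"
    unfolding delta_eq[OF fin] Deq sum_distrib_left ..
  also have "\<dots> = (\<Sum>H\<in>D1 E B S \<union> D2 E B S. xprod (insert H S))"
  proof (rule sum.cong[OF refl])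
    fix H assume "H \<in> D1 E B S \<union> D2 E B S"
    then have "en E S \<in> cap H" unfolding D1_def D2_def by blast
    then have "H \<notin> S" using H_notin[OF fin bf] by blast
    then show "xprod S * var H = xprod (insert H S)" using xprod_insert[OF finS] by simp
  qed
  also have "\<dots> = (\<Sum>H\<in>D1 E B S. xprod (insert H S)) + (\<Sum>H\<in>D2 E B S. xprod (insert H S))"
    using f1 f2 dj by (rule sum.union_disjoint)
  finally show ?thesis .
qed

lemma D2_in: assumes T: "(S, f) \<in> TT E B m" and H: "H \<in> D2 E B S"
  shows "xprod (insert H S) \<in> KK E B"
proof (rule ig_gen)
  have "insert H S \<subseteq> biflats E B" using biflag_biflats[OF TTD(3)[OF T]] H unfolding D2_def by blast
  moreover have "\<not> is_biflag E B (insert H S)" using H unfolding D2_def by blast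
  ultimately show "xprod (insert H S) \<in> I_gens E B \<union> J_gens E B" unfolding I_gens_def by blast
qed

lemma TT0: assumes "E \<noteq> {}" shows "TT E B 0 = {({}, \<lambda>_. 0)}"
proof
  show "TT E B 0 \<subseteq> {({}, \<lambda>_. 0)}"
  proof
    fix q assume q: "q \<in> TT E B 0"
    obtain S f where q': "q = (S, f)" by (metis prod.collapse)
    have T: "(S, f) \<in> TT E B 0" using q q' by simp
    have "S = {}" using TTD(1,2)[OF T] by simp
    moreover have "f = (\<lambda>_. 0)" using TTD(4)[OF T] \<open>S = {}\<close> by auto
    ultimately show "q \<in> {({}, \<lambda>_. 0)}" using q' by simp
  qed
  show "{({}, \<lambda>_. 0)} \<subseteq> TT E B 0"
  proof -
    have "is_biflag E B {}" using assms unfolding is_biflag_def by simp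
    then have "({}, \<lambda>_. 0) \<in> TT E B 0" by (intro TTI) auto
    thus ?thesis by simp
  qed
qed

lemma main_TT: assumes fin: "finite E" and i: "i \<in> E"
  shows "delta E B i ^ m - (\<Sum>p\<in>TT E B m. xprod (fst p)) \<in> KK E B"
proof (induction m)
  case 0
  have "E \<noteq> {}" using i by blast
  then show ?case unfolding TT0[OF \<open>E \<noteq> {}\<close>] by (simp add: xprod_def ig_zero)
next
  case (Suc m)
  let ?D = "delta E B i"
  let ?A = "\<Sum>p\<in>TT E B m. xprod (fst p)"
  let ?A' = "\<Sum>p\<in>TT E B (Suc m). xprod (fst p)"
  let ?Q = "\<Sum>p\<in>TT E B m. xprod (fst p) * delta E B (en E (fst p))"
  let ?R = "\<Sum>p\<in>TT E B m. xprod (fst p) * (?D - delta E B (en E (fst p)))"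
  let ?Z = "\<Sum>p\<in>TT E B m. \<Sum>H\<in>D2 E B (fst p). xprod (insert H (fst p))"
  have finT: "finite (TT E B m)" using finite_TT[OF fin] .
  have eq1: "?D ^ Suc m - ?A' = (?D ^ m - ?A) * ?D + ?R + (?Q - ?A')"
  proof -
    have "?R = ?A * ?D - ?Q" unfolding sum_distrib_right sum_subtractf[symmetric] right_diff_distrib ..
    thus ?thesis by (simp add: algebra_simps)
  qed
  have Q: "?Q = (\<Sum>p\<in>TT E B m. \<Sum>H\<in>D1 E B (fst p). xprod (insert H (fst p))) + ?Z"
  proof -
    have "?Q = (\<Sum>p\<in>TT E B m. (\<Sum>H\<in>D1 E B (fst p). xprod (insert H (fst p))) + (\<Sum>H\<in>D2 E B (fst p). xprod (insert H (fst p))))"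
    proof (rule sum.cong[OF refl])
      fix p assume p: "p \<in> TT E B m"
      then have "(fst p, snd p) \<in> TT E B m" by simp
      then show "xprod (fst p) * delta E B (en E (fst p)) = (\<Sum>H\<in>D1 E B (fst p). xprod (insert H (fst p))) + (\<Sum>H\<in>D2 E B (fst p). xprod (insert H (fst p)))"
        by (rule xd[OF fin])
    qed
    thus ?thesis by (simp add: sum.distrib)
  qed
  have S1: "(\<Sum>p\<in>TT E B m. \<Sum>H\<in>D1 E B (fst p). xprod (insert H (fst p))) = ?A'"
  proof -
    have fD: "\<forall>p\<in>TT E B m. finite (D1 E B (fst p))" using fin_biflats[OF fin] unfolding D1_def by simp
    have "(\<Sum>p\<in>TT E B m. \<Sum>H\<in>D1 E B (fst p). xprod (insert H (fst p)))
        = (\<Sum>q\<in>Sigma (TT E B m) (\<lambda>p. D1 E B (fst p)). xprod (insert (snd q) (fst (fst q))))"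
      using sum.Sigma[OF finT fD, of "\<lambda>p H. xprod (insert H (fst p))"] by (simp add: split_beta)
    also have "\<dots> = (\<Sum>q\<in>Sigma (TT E B m) (\<lambda>p. D1 E B (fst p)). xprod (fst (psi E q)))"
      unfolding psi_def by simp
    also have "\<dots> = (\<Sum>q\<in>psi E ` Sigma (TT E B m) (\<lambda>p. D1 E B (fst p)). xprod (fst q))"
      using sum.reindex[OF psi_inj[OF fin, of B m], of "\<lambda>q. xprod (fst q)"] by (simp add: comp_def)
    also have "\<dots> = ?A'" unfolding psi_image[OF fin] ..
    finally show ?thesis .
  qed
  have QZ: "?Q - ?A' = ?Z" using Q S1 by simp
  have "?Z \<in> KK E B"
  proof (rule ig_sum)
    fix p assume p: "p \<in> TT E B m"
    then have T: "(fst p, snd p) \<in> TT E B m" by simp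
    show "(\<Sum>H\<in>D2 E B (fst p). xprod (insert H (fst p))) \<in> KK E B"
      by (rule ig_sum) (rule D2_in[OF T])
  qed
  then have h3: "?Q - ?A' \<in> KK E B" unfolding QZ .
  have h2: "?R \<in> KK E B"
  proof (rule ig_sum)
    fix p assume p: "p \<in> TT E B m"
    then have T: "(fst p, snd p) \<in> TT E B m" by simp
    have "en E (fst p) \<in> E" using en_props(1)[OF fin TTD(3)[OF T]] .
    then show "xprod (fst p) * (?D - delta E B (en E (fst p))) \<in> KK E B"
      by (intro ig_mult delta_diff[OF fin i])
  qed
  have h1: "(?D ^ m - ?A) * ?D \<in> KK E B" using Suc.IH by (rule ig_mult2)
  show ?case unfolding eq1 by (rule ig_add[OF ig_add[OF h1 h2] h3])
qed



definition fm :: "biflat list \<Rightarrow> nat list \<Rightarrow> biflat \<Rightarrow> nat" where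
  "fm L e x = (case map_of (zip L e) x of None \<Rightarrow> 0 | Some v \<Rightarrow> v)"

lemma fm_nth: "length L = length e \<Longrightarrow> distinct L \<Longrightarrow> i < length L \<Longrightarrow> fm L e (L ! i) = e ! i"
  unfolding fm_def using map_of_zip_nth[of L e i] by simp

lemma fm_out: assumes "length L = length e" "x \<notin> set L" shows "fm L e x = 0"
proof -
  have "fst ` set (zip L e) = set L" using assms(1) by (metis map_fst_zip set_map)
  then have "map_of (zip L e) x = None" using assms(2) by (simp add: map_of_eq_None_iff)
  thus ?thesis unfolding fm_def by simp
qed

definition kappa :: "biflat \<Rightarrow> int" where
  "kappa x = int (card (fst x)) - int (card (snd x))"

lemma kappa_lt:
  assumes fin: "finite E" and bx: "is_biflat E B x" and by': "is_biflat E B y"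
    and s1: "fst x \<subseteq> fst y" and s2: "snd y \<subseteq> snd x" and ne: "x \<noteq> y"
  shows "kappa x < kappa y"
proof -
  have fy: "finite (fst y)" using biflat_sub[OF by'] fin finite_subset by blast
  have fx: "finite (snd x)" using biflat_sub[OF bx] fin finite_subset by blast
  have c1: "card (fst x) \<le> card (fst y)" using card_mono[OF fy s1] .
  have c2: "card (snd y) \<le> card (snd x)" using card_mono[OF fx s2] .
  have "fst x \<noteq> fst y \<or> snd x \<noteq> snd y" using ne by (metis prod.collapse)
  then have "card (fst x) < card (fst y) \<or> card (snd y) < card (snd x)"
  proof
    assume "fst x \<noteq> fst y"
    then have "fst x \<subset> fst y" using s1 by blast
    then show ?thesis using psubset_card_mono[OF fy] by blast
  next
    assume "snd x \<noteq> snd y"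
    then have "snd y \<subset> snd x" using s2 by blast
    then show ?thesis using psubset_card_mono[OF fx] by blast
  qed
  then show ?thesis using c1 c2 unfolding kappa_def by linarith
qed

lemma compatible_alt: "compatible x y \<longleftrightarrow> (fst x \<subseteq> fst y \<and> snd y \<subseteq> snd x) \<or> (fst y \<subseteq> fst x \<and> snd x \<subseteq> snd y)"
  by (cases x, cases y) (simp add: compatible_def)

lemma TsD: assumes "(L, e) \<in> T_set E B m"
  shows "length L = m" "distinct L" "is_biflag E B (set L)"
    "\<And>i j. i < j \<Longrightarrow> j < m \<Longrightarrow> fst (L ! i) \<subseteq> fst (L ! j) \<and> snd (L ! j) \<subseteq> snd (L ! i)"
    "length e = m" "distinct e" "set e \<subseteq> E"
    "\<And>i. i < m \<Longrightarrow> e ! i \<in> fst (L ! i) \<inter> snd (L ! i)"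
    "\<And>i. i < m \<Longrightarrow> e ! i = Max (E - (\<Union>j\<in>{j. j < m \<and> e ! j > e ! i}. fst (L ! j) \<inter> snd (L ! j)))"
  using assms unfolding T_set_def mem_Collect_eq case_prod_conv by blast+

lemma TsI: assumes "length L = m" "distinct L" "is_biflag E B (set L)"
    "\<And>i j. i < j \<Longrightarrow> j < m \<Longrightarrow> fst (L ! i) \<subseteq> fst (L ! j) \<and> snd (L ! j) \<subseteq> snd (L ! i)"
    "length e = m" "distinct e" "set e \<subseteq> E"
    "\<And>i. i < m \<Longrightarrow> e ! i \<in> fst (L ! i) \<inter> snd (L ! i)"
    "\<And>i. i < m \<Longrightarrow> e ! i = Max (E - (\<Union>j\<in>{j. j < m \<and> e ! j > e ! i}. fst (L ! j) \<inter> snd (L ! j)))"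
  shows "(L, e) \<in> T_set E B m"
  using assms unfolding T_set_def mem_Collect_eq case_prod_conv by blast

lemma set_filter_nth: assumes "length L = m" "length e = m" "distinct L"
  shows "{y \<in> set L. P (fm L e y)} = (\<lambda>j. L ! j) ` {j. j < m \<and> P (e ! j)}"
proof
  show "{y \<in> set L. P (fm L e y)} \<subseteq> (\<lambda>j. L ! j) ` {j. j < m \<and> P (e ! j)}"
  proof
    fix y assume y: "y \<in> {y \<in> set L. P (fm L e y)}"
    then obtain j where j: "j < m" "y = L ! j" using assms(1) by (auto simp: in_set_conv_nth)
    then have "P (e ! j)" using y fm_nth[of L e j] assms by simp
    then show "y \<in> (\<lambda>j. L ! j) ` {j. j < m \<and> P (e ! j)}" using j by blast
  qed
  show "(\<lambda>j. L ! j) ` {j. j < m \<and> P (e ! j)} \<subseteq> {y \<in> set L. P (fm L e y)}"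
  proof
    fix y assume "y \<in> (\<lambda>j. L ! j) ` {j. j < m \<and> P (e ! j)}"
    then obtain j where j: "j < m" "P (e ! j)" "y = L ! j" by blast
    then show "y \<in> {y \<in> set L. P (fm L e y)}" using fm_nth[of L e j] assms by simp
  qed
qed

lemma UN_nth: "(\<Union>y\<in>(\<lambda>j. L ! j) ` J. cap y) = (\<Union>j\<in>J. fst (L ! j) \<inter> snd (L ! j))"
  by (simp add: cap_def)

lemma T_alpha: assumes fin: "finite E" and T: "(L, e) \<in> T_set E B m"
  shows "(set L, fm L e) \<in> TT E B m"
proof -
  note D = TsD[OF T]
  have le: "length L = length e" using D(1,5) by simp
  show ?thesis
  proof (rule TTI)
    show "finite (set L)" by simp
    show "card (set L) = m" using D(1,2) by (simp add: distinct_card)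
    show "is_biflag E B (set L)" using D(3) .
    show "fm L e x = 0" if "x \<notin> set L" for x using fm_out[OF le that] .
    show "inj_on (fm L e) (set L)"
    proof (rule inj_onI)
      fix x y assume x: "x \<in> set L" and y: "y \<in> set L" and eq: "fm L e x = fm L e y"
      obtain i where i: "i < m" "x = L ! i" using x D(1) in_set_conv_nth by metis
      obtain j where j: "j < m" "y = L ! j" using y D(1) in_set_conv_nth by metis
      have "e ! i = e ! j" using eq fm_nth[OF le D(2), of i] fm_nth[OF le D(2), of j] i j D(1) by simp
      then have "i = j" using D(5,6) i j nth_eq_iff_index_eq by metis
      then show "x = y" using i j by simp
    qed
    show "fm L e x \<in> E" if xL: "x \<in> set L" for x
    proof -
      obtain i where i: "i < m" "x = L ! i" using xL D(1) in_set_conv_nth by metis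
      then show ?thesis using fm_nth[OF le D(2), of i] D(1,5,7) nth_mem[of i e] by auto
    qed
    show "fm L e x \<in> cap x" if xL: "x \<in> set L" for x
    proof -
      obtain i where i: "i < m" "x = L ! i" using xL D(1) in_set_conv_nth by metis
      then show ?thesis using fm_nth[OF le D(2), of i] D(1) D(8)[OF i(1)] by (simp add: cap_def)
    qed
    show "fm L e x = Max (E - (\<Union>y\<in>{y \<in> set L. fm L e x < fm L e y}. cap y))" if xL: "x \<in> set L" for x
    proof -
      obtain i where i: "i < m" "x = L ! i" using xL D(1) in_set_conv_nth by metis
      have fx: "fm L e x = e ! i" using fm_nth[OF le D(2), of i] i D(1) by simp
      have "(\<Union>y\<in>{y \<in> set L. fm L e x < fm L e y}. cap y) = (\<Union>j\<in>{j. j < m \<and> e ! j > e ! i}. fst (L ! j) \<inter> snd (L ! j))"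
        unfolding fx set_filter_nth[OF D(1) D(5) D(2), of "\<lambda>v. e ! i < v"] UN_nth by simp
      then show ?thesis using D(9)[OF i(1)] fx by simp
    qed
  qed
qed

lemma kappa_sorted: assumes fin: "finite E" and T: "(L, e) \<in> T_set E B m"
  shows "sorted_wrt (<) (map kappa L)"
proof -
  note D = TsD[OF T]
  have "kappa (L ! i) < kappa (L ! j)" if "i < j" "j < length L" for i j
  proof (rule kappa_lt[OF fin])
    have "L ! i \<in> set L" "L ! j \<in> set L" using that by auto
    then show "is_biflat E B (L ! i)" "is_biflat E B (L ! j)" using D(3) unfolding is_biflag_def by blast+
    show "fst (L ! i) \<subseteq> fst (L ! j)" "snd (L ! j) \<subseteq> snd (L ! i)" using D(4)[of i j] that D(1) by auto
    show "L ! i \<noteq> L ! j" using D(2) that nth_eq_iff_index_eq by fastforce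
  qed
  then show ?thesis unfolding sorted_wrt_map by (simp add: sorted_wrt_iff_nth_less)
qed

lemma kinj: assumes "sorted_wrt (<) (map kappa L)" shows "inj_on kappa (set L)"
proof (rule inj_onI)
  fix x y assume x: "x \<in> set L" and y: "y \<in> set L" and eq: "kappa x = kappa y"
  obtain i where i: "i < length L" "x = L ! i" using x by (auto simp: in_set_conv_nth)
  obtain j where j: "j < length L" "y = L ! j" using y by (auto simp: in_set_conv_nth)
  have s: "\<And>i j. i < j \<Longrightarrow> j < length L \<Longrightarrow> kappa (L ! i) < kappa (L ! j)"
    using assms unfolding sorted_wrt_map by (simp add: sorted_wrt_iff_nth_less)
  show "x = y"
  proof (rule ccontr)
    assume "x \<noteq> y"
    then have "i \<noteq> j" using i j by auto
    then show False using s[of i j] s[of j i] i j eq by (cases "i < j") auto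
  qed
qed

definition alpha where "alpha p = (set (fst p), fm (fst p) (snd p))"

lemma alpha_inj: assumes fin: "finite E" shows "inj_on alpha (T_set E B m)"
proof (rule inj_onI)
  fix p q assume p: "p \<in> T_set E B m" and q: "q \<in> T_set E B m" and eq: "alpha p = alpha q"
  obtain L1 e1 where p': "p = (L1, e1)" by (metis prod.collapse)
  obtain L2 e2 where q': "q = (L2, e2)" by (metis prod.collapse)
  have T1: "(L1, e1) \<in> T_set E B m" using p p' by simp
  have T2: "(L2, e2) \<in> T_set E B m" using q q' by simp
  have sL: "set L1 = set L2" and sf: "fm L1 e1 = fm L2 e2" using eq unfolding p' q' alpha_def by simp_all
  have s1: "sorted_wrt (<) (map kappa L1)" using kappa_sorted[OF fin T1] .
  have s2: "sorted_wrt (<) (map kappa L2)" using kappa_sorted[OF fin T2] .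
  have "map kappa L2 = map kappa L1" using strict_sorted_equal[OF s1 s2] sL by simp
  moreover have "inj_on kappa (set L1 \<union> set L2)" using kinj[OF s1] sL by simp
  ultimately have LL: "L1 = L2" using inj_on_map_eq_map by metis
  have e1: "e1 = map (fm L1 e1) L1"
    using TsD(1,2,5)[OF T1] fm_nth[of L1 e1] by (intro nth_equalityI) auto
  have e2: "e2 = map (fm L2 e2) L2"
    using TsD(1,2,5)[OF T2] fm_nth[of L2 e2] by (intro nth_equalityI) auto
  have "e1 = e2" using e1 e2 LL sf by metis
  then show "p = q" using p' q' LL by simp
qed

lemma alpha_onto: assumes fin: "finite E" and T: "(S, f) \<in> TT E B m"
  shows "(S, f) \<in> alpha ` T_set E B m"
proof -
  obtain xs where xs: "set xs = S" "distinct xs" using finite_distinct_list[OF TTD(1)[OF T]] by blast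
  define L where "L = sort_key kappa xs"
  define e where "e = map f L"
  have sL: "set L = S" unfolding L_def using xs by simp
  have dL: "distinct L" unfolding L_def using xs by simp
  have lL: "length L = m" using distinct_card[OF dL] sL TTD(2)[OF T] by simp
  have srt: "sorted (map kappa L)" unfolding L_def by simp
  have le: "length L = length e" unfolding e_def by simp
  have bfS: "is_biflag E B S" using TTD(3)[OF T] .
  have enth: "e ! i = f (L ! i)" if "i < m" for i unfolding e_def using that lL by simp
  have fmf: "fm L e = f"
  proof
    fix x show "fm L e x = f x"
    proof (cases "x \<in> S")
      case True
      then obtain i where i: "i < m" "x = L ! i" using sL lL by (metis in_set_conv_nth)
      then show ?thesis using fm_nth[OF le dL, of i] enth lL by simp
    next
      case False
      then show ?thesis using fm_out[OF le, of x] sL TTD(4)[OF T] by simp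
    qed
  qed
  have "(L, e) \<in> T_set E B m"
  proof (rule TsI)
    show "length L = m" using lL .
    show "distinct L" using dL .
    show "is_biflag E B (set L)" using bfS sL by simp
    show "fst (L ! i) \<subseteq> fst (L ! j) \<and> snd (L ! j) \<subseteq> snd (L ! i)" if ij: "i < j" "j < m" for i j
    proof -
      have m: "L ! i \<in> S" "L ! j \<in> S" using ij lL sL by auto
      have ne: "L ! i \<noteq> L ! j" using dL ij lL nth_eq_iff_index_eq by fastforce
      have bi: "is_biflat E B (L ! i)" "is_biflat E B (L ! j)" using m bfS unfolding is_biflag_def by blast+
      have c: "compatible (L ! i) (L ! j)" using m bfS unfolding is_biflag_def by blast
      have kle: "kappa (L ! i) \<le> kappa (L ! j)" using srt ij lL by (simp add: sorted_iff_nth_mono_less)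
      show ?thesis
      proof (rule ccontr)
        assume nn: "\<not> ?thesis"
        then have "fst (L ! j) \<subseteq> fst (L ! i) \<and> snd (L ! i) \<subseteq> snd (L ! j)" using c unfolding compatible_alt by blast
        then have "kappa (L ! j) < kappa (L ! i)" using kappa_lt[OF fin bi(2) bi(1)] ne by metis
        then show False using kle by simp
      qed
    qed
    show "length e = m" using le lL by simp
    show "distinct e" unfolding e_def using dL TTD(5)[OF T] sL by (simp add: distinct_map)
    show "set e \<subseteq> E" unfolding e_def using TTD(6)[OF T] sL by auto
    show "e ! i \<in> fst (L ! i) \<inter> snd (L ! i)" if i: "i < m" for i
      using enth[OF i] TTD(7)[OF T, of "L ! i"] i lL sL by (auto simp: cap_def)
    show "e ! i = Max (E - (\<Union>j\<in>{j. j < m \<and> e ! j > e ! i}. fst (L ! j) \<inter> snd (L ! j)))" if i: "i < m" for i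
    proof -
      have xS: "L ! i \<in> S" using i lL sL by auto
      have "{y \<in> S. f (L ! i) < f y} = {y \<in> set L. e ! i < fm L e y}" using sL enth[OF i] fmf by simp
      also have "\<dots> = (\<lambda>j. L ! j) ` {j. j < m \<and> e ! i < e ! j}"
        by (rule set_filter_nth[OF lL _ dL]) (use le lL in simp)
      finally have se: "(\<Union>y\<in>{y \<in> S. f (L ! i) < f y}. cap y) = (\<Union>j\<in>{j. j < m \<and> e ! j > e ! i}. fst (L ! j) \<inter> snd (L ! j))"
        by (simp add: UN_nth cap_def)
      have "f (L ! i) = Max (E - (\<Union>y\<in>{y \<in> S. f (L ! i) < f y}. cap y))" using TTD(8)[OF T xS] .
      then show ?thesis unfolding se using enth[OF i] by simp
    qed
  qed
  moreover have "alpha (L, e) = (S, f)" unfolding alpha_def using sL fmf by simp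
  ultimately show ?thesis by (metis image_eqI)
qed

lemma alpha_image: assumes fin: "finite E" shows "alpha ` T_set E B m = TT E B m"
proof
  show "alpha ` T_set E B m \<subseteq> TT E B m"
  proof
    fix q assume "q \<in> alpha ` T_set E B m"
    then obtain p where p: "p \<in> T_set E B m" "q = alpha p" by blast
    have "(fst p, snd p) \<in> T_set E B m" using p by simp
    then show "q \<in> TT E B m" using T_alpha[OF fin] p unfolding alpha_def by simp
  qed
  show "TT E B m \<subseteq> alpha ` T_set E B m"
  proof
    fix q assume q: "q \<in> TT E B m"
    then have "(fst q, snd q) \<in> TT E B m" by simp
    then show "q \<in> alpha ` T_set E B m" using alpha_onto[OF fin, of "fst q" "snd q"] by simp
  qed
qed


theorem mainTheorem7:
  fixes n m :: nat and B :: "nat set set"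
  assumes "matroid_bases {0..n} B"
    and "no_loops {0..n} B"
    and "no_coloops {0..n} B"
    and "i \<in> {0..n}"
  shows "chow_eq {0..n} B ((delta {0..n} B i) ^ m)
           (\<Sum>(L, e)\<in>T_set {0..n} B m. xprod (set L))"
proof -
  have fin: "finite {0..n}" by simp
  have "(\<Sum>(L, e)\<in>T_set {0..n} B m. xprod (set L)) = (\<Sum>p\<in>T_set {0..n} B m. xprod (fst (alpha p)))"
    by (rule sum.cong) (auto simp: alpha_def split_beta)
  also have "\<dots> = (\<Sum>q\<in>alpha ` T_set {0..n} B m. xprod (fst q))"
    using sum.reindex[OF alpha_inj[OF fin, of B m], of "\<lambda>q. xprod (fst q)"] by (simp add: comp_def)
  also have "\<dots> = (\<Sum>q\<in>TT {0..n} B m. xprod (fst q))" unfolding alpha_image[OF fin] ..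
  finally have eq: "(\<Sum>(L, e)\<in>T_set {0..n} B m. xprod (set L)) = (\<Sum>q\<in>TT {0..n} B m. xprod (fst q))" .
  show ?thesis unfolding chow_eq_def eq using main_TT[OF fin assms(4)] .
qed

end
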